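(* Every tree with at least three vertices has at least one saturated vertex.
   Context: A $2$-matching of a graph $G$ is a set of edges such that every vertex is incident to at most two of them; a maximum $2$-matching is one of largest possible size. A vertex $w$ is saturated in $G$ if every maximum $2$-matching of $G$ has exactly two edges incident to $w$. *)

theory Defs
  imports Main
begin

definition simple_graph :: "'a set \<Rightarrow> 'a set set \<Rightarrow> bool" where
  "simple_graph V E \<longleftrightarrow> finite V \<and>
     (\<forall>e\<in>E. \<exists>u v. e = {u, v} \<and> u \<noteq> v \<and> u \<in> V \<and> v \<in> V)"

definition adj :: "'a set set \<Rightarrow> 'a \<Rightarrow> 'a \<Rightarrow> bool" where
  "adj E u v \<longleftrightarrow> {u, v} \<in> E"

definition connected_graph :: "'a set \<Rightarrow> 'a set set \<Rightarrow> bool" where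
  "connected_graph V E \<longleftrightarrow> (\<forall>u\<in>V. \<forall>v\<in>V. (adj E)\<^sup>*\<^sup>* u v)"

definition is_cycle :: "'a set set \<Rightarrow> 'a list \<Rightarrow> bool" where
  "is_cycle E cs \<longleftrightarrow> length cs \<ge> 3 \<and> distinct cs \<and>
     (\<forall>i. Suc i < length cs \<longrightarrow> adj E (cs ! i) (cs ! Suc i)) \<and>
     adj E (last cs) (hd cs)"

definition acyclic_graph :: "'a set set \<Rightarrow> bool" where
  "acyclic_graph E \<longleftrightarrow> \<not> (\<exists>cs. is_cycle E cs)"

definition tree :: "'a set \<Rightarrow> 'a set set \<Rightarrow> bool" where
  "tree V E \<longleftrightarrow> simple_graph V E \<and> V \<noteq> {} \<and> connected_graph V E \<and> acyclic_graph E"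

definition two_matching :: "'a set set \<Rightarrow> 'a set set \<Rightarrow> bool" where
  "two_matching E M \<longleftrightarrow> M \<subseteq> E \<and> (\<forall>v. card {e\<in>M. v \<in> e} \<le> 2)"

definition max_two_matching :: "'a set set \<Rightarrow> 'a set set \<Rightarrow> bool" where
  "max_two_matching E M \<longleftrightarrow> two_matching E M \<and>
     (\<forall>M'. two_matching E M' \<longrightarrow> card M' \<le> card M)"

definition saturated :: "'a set \<Rightarrow> 'a set set \<Rightarrow> 'a \<Rightarrow> bool" where
  "saturated V E w \<longleftrightarrow> w \<in> V \<and>
     (\<forall>M. max_two_matching E M \<longrightarrow> card {e\<in>M. w \<in> e} = 2)"

end

theory Submission
  imports Defs
begin

lemma adj_sym: "adj E u v \<longleftrightarrow> adj E v u"
  by (simp add: adj_def insert_commute)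

lemma adj_irrefl: "simple_graph V E \<Longrightarrow> \<not> adj E v v"
  unfolding simple_graph_def adj_def
  by (metis doubleton_eq_iff insert_absorb2)

lemma adj_in_V: "simple_graph V E \<Longrightarrow> adj E u v \<Longrightarrow> u \<in> V \<and> v \<in> V"
  unfolding simple_graph_def adj_def by (metis doubleton_eq_iff)

lemma finite_E: "simple_graph V E \<Longrightarrow> finite E"
proof -
  assume sg: "simple_graph V E"
  have "E \<subseteq> Pow V" using sg by (auto simp: simple_graph_def)
  moreover have "finite V" using sg by (simp add: simple_graph_def)
  ultimately show ?thesis using finite_subset by blast
qed

lemma finite_N: "simple_graph V E \<Longrightarrow> finite {u. adj E v u}"
proof -
  assume sg: "simple_graph V E"
  have "{u. adj E v u} \<subseteq> V" using adj_in_V[OF sg] by blast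
  moreover have "finite V" using sg by (simp add: simple_graph_def)
  ultimately show ?thesis using finite_subset by blast
qed

lemma card_insert_filter:
  assumes "finite M"
  shows "card {e\<in>insert f M. v \<in> e} \<le> Suc (card {e\<in>M. v \<in> e})"
proof -
  have "{e\<in>insert f M. v \<in> e} \<subseteq> insert f {e\<in>M. v \<in> e}" by auto
  hence "card {e\<in>insert f M. v \<in> e} \<le> card (insert f {e\<in>M. v \<in> e})"
    using assms by (intro card_mono) auto
  also have "\<dots> \<le> Suc (card {e\<in>M. v \<in> e})" using assms by (simp add: card_insert_le_m1 card_insert_if)
  finally show ?thesis .
qed

lemma sat_lemma:
  assumes sg: "simple_graph V E" and w: "w \<in> V"
    and a1: "adj E w c1" and a2: "adj E w c2" and ne: "c1 \<noteq> c2"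
    and d1: "card {u. adj E c1 u} \<le> 2" and d2: "card {u. adj E c2 u} \<le> 2"
  shows "saturated V E w"
  unfolding saturated_def
proof (intro conjI allI impI)
  show "w \<in> V" by fact
  fix M assume mx: "max_two_matching E M"
  hence tm: "two_matching E M" and mxc: "\<And>M'. two_matching E M' \<Longrightarrow> card M' \<le> card M"
    by (auto simp: max_two_matching_def)
  have ME: "M \<subseteq> E" using tm by (simp add: two_matching_def)
  have finM: "finite M" using finite_E[OF sg] ME finite_subset by blast
  have le2: "\<And>v. card {e\<in>M. v \<in> e} \<le> 2" using tm by (simp add: two_matching_def)
  show "card {e\<in>M. w \<in> e} = 2"
  proof (rule ccontr)
    assume "card {e\<in>M. w \<in> e} \<noteq> 2"
    hence lw: "card {e\<in>M. w \<in> e} \<le> 1" using le2[of w] by linarith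
    have "\<exists>c. adj E w c \<and> card {u. adj E c u} \<le> 2 \<and> {w,c} \<notin> M"
    proof (rule ccontr)
      assume "\<not> ?thesis"
      hence "{w,c1} \<in> M" "{w,c2} \<in> M" using a1 a2 d1 d2 by auto
      hence "{{w,c1},{w,c2}} \<subseteq> {e\<in>M. w \<in> e}" by auto
      moreover have "card {{w,c1},{w,c2}} = 2" using ne by (auto simp: doubleton_eq_iff)
      moreover have "finite {e\<in>M. w \<in> e}" using finM by simp
      ultimately have "2 \<le> card {e\<in>M. w \<in> e}" by (metis card_mono)
      thus False using lw by simp
    qed
    then obtain c where ac: "adj E w c" and dc: "card {u. adj E c u} \<le> 2" and nM: "{w,c} \<notin> M" by blast
    have finN: "finite {u. adj E c u}" using finite_N[OF sg] .
    have "adj E c w" using ac by (simp add: adj_sym)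
    hence cwin: "{c,w} \<in> (\<lambda>u. {c,u}) ` {u. adj E c u}" by blast
    have sub: "{e\<in>M. c \<in> e} \<subseteq> (\<lambda>u. {c,u}) ` {u. adj E c u} - {{c,w}}"
    proof
      fix e assume e: "e \<in> {e\<in>M. c \<in> e}"
      then have eE: "e \<in> E" using ME by auto
      then obtain a b where ab: "e = {a,b}" using sg by (auto simp: simple_graph_def)
      have "e \<in> (\<lambda>u. {c,u}) ` {u. adj E c u}"
      proof (cases "a = c")
        case True thus ?thesis using ab eE by (auto simp: adj_def)
      next
        case False
        hence "b = c" using e ab by auto
        hence "e = {c,a}" using ab by auto
        thus ?thesis using eE by (auto simp: adj_def)
      qed
      moreover have "e \<noteq> {c,w}" using nM e by (auto simp: insert_commute)
      ultimately show "e \<in> (\<lambda>u. {c,u}) ` {u. adj E c u} - {{c,w}}" by blast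
    qed
    have "card {e\<in>M. c \<in> e} \<le> card ((\<lambda>u. {c,u}) ` {u. adj E c u} - {{c,w}})"
      using sub finN by (intro card_mono) auto
    also have "\<dots> = card ((\<lambda>u. {c,u}) ` {u. adj E c u}) - 1"
      using cwin by (simp add: card_Diff_singleton)
    also have "\<dots> \<le> card {u. adj E c u} - 1" using card_image_le[OF finN] by (meson diff_le_mono)
    finally have lc: "card {e\<in>M. c \<in> e} \<le> 1" using dc by linarith
    have tm': "two_matching E (insert {w,c} M)"
      unfolding two_matching_def
    proof (intro conjI allI)
      show "insert {w,c} M \<subseteq> E" using ME ac by (auto simp: adj_def)
      fix v
      show "card {e\<in>insert {w,c} M. v \<in> e} \<le> 2"
      proof (cases "v = w \<or> v = c")
        case True
        thus ?thesis using card_insert_filter[OF finM, of "{w,c}" v] lw lc by auto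
      next
        case False
        hence "{e\<in>insert {w,c} M. v \<in> e} = {e\<in>M. v \<in> e}" by auto
        thus ?thesis using le2 by simp
      qed
    qed
    have "card (insert {w,c} M) = Suc (card M)" using finM nM by simp
    thus False using mxc[OF tm'] by simp
  qed
qed


lemma cycle_lemma:
  assumes sg: "simple_graph V E" and finB: "finite B" and bne: "b0 \<in> B"
    and deg: "\<And>b. b \<in> B \<Longrightarrow> 2 \<le> card ({u. adj E b u} \<inter> B)"
  shows "\<exists>cs. is_cycle E cs"
proof -
  define P where "P = {xs. xs \<noteq> [] \<and> distinct xs \<and> set xs \<subseteq> B \<and>
      (\<forall>i. Suc i < length xs \<longrightarrow> adj E (xs!i) (xs!Suc i))}"
  have "P \<subseteq> {xs. set xs \<subseteq> B \<and> length xs \<le> card B}"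
  proof
    fix xs assume "xs \<in> P"
    hence d: "distinct xs" and s: "set xs \<subseteq> B" by (auto simp: P_def)
    have "length xs = card (set xs)" using distinct_card[OF d] by simp
    also have "\<dots> \<le> card B" using card_mono[OF finB s] .
    finally show "xs \<in> {xs. set xs \<subseteq> B \<and> length xs \<le> card B}" using s by simp
  qed
  hence finP: "finite P" using finite_lists_length_le[OF finB] finite_subset by blast
  have b0P: "[b0] \<in> P" using bne by (simp add: P_def)
  define m where "m = Max (length ` P)"
  have "m \<in> length ` P" unfolding m_def using finP b0P by (intro Max_in) auto
  then obtain xs where xsP: "xs \<in> P" and lx: "length xs = m" by blast
  have maxl: "\<And>ys. ys \<in> P \<Longrightarrow> length ys \<le> length xs"
    using lx finP unfolding m_def by (simp add: Max_ge)
  have xne: "xs \<noteq> []" and dxs: "distinct xs" and sxs: "set xs \<subseteq> B"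
    and axs: "\<And>i. Suc i < length xs \<Longrightarrow> adj E (xs!i) (xs!Suc i)"
    using xsP by (auto simp: P_def)
  define x where "x = xs ! 0"
  have xB: "x \<in> B" using xne sxs unfolding x_def by (simp add: subset_iff)
  have fin2: "finite ({u. adj E x u} \<inter> B)" using finB by simp
  have "\<not> ({u. adj E x u} \<inter> B \<subseteq> {xs ! 1})"
  proof
    assume "{u. adj E x u} \<inter> B \<subseteq> {xs ! 1}"
    hence "card ({u. adj E x u} \<inter> B) \<le> card {xs ! 1}" by (intro card_mono) auto
    thus False using deg[OF xB] by simp
  qed
  then obtain y where axy: "adj E x y" and yB: "y \<in> B" and y1: "y \<noteq> xs ! 1" by blast
  have yx: "y \<noteq> x" using axy adj_irrefl[OF sg] by blast
  have ayx: "adj E y x" using axy by (simp add: adj_sym)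
  show ?thesis
  proof (cases "y \<in> set xs")
    case False
    have "y # xs \<in> P" unfolding P_def
    proof (intro CollectI conjI allI impI)
      show "y # xs \<noteq> []" by simp
      show "distinct (y # xs)" using False dxs by simp
      show "set (y # xs) \<subseteq> B" using yB sxs by simp
      fix i assume i: "Suc i < length (y # xs)"
      show "adj E ((y # xs) ! i) ((y # xs) ! Suc i)"
      proof (cases i)
        case 0 thus ?thesis using ayx by (simp add: x_def)
      next
        case (Suc j) thus ?thesis using i axs by simp
      qed
    qed
    from maxl[OF this] show ?thesis by simp
  next
    case True
    then obtain j where j: "j < length xs" and xj: "xs ! j = y" by (auto simp: in_set_conv_nth)
    have j0: "j \<noteq> 0"
    proof
      assume "j = 0" thus False using xj yx by (simp add: x_def)
    qed
    have j1: "j \<noteq> 1" using xj y1 by auto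
    define cs where "cs = take (Suc j) xs"
    have lcs: "length cs = Suc j" using j by (simp add: cs_def)
    have "is_cycle E cs" unfolding is_cycle_def
    proof (intro conjI allI impI)
      show "3 \<le> length cs" using lcs j0 j1 by simp
      show "distinct cs" using dxs by (simp add: cs_def)
      fix i assume i: "Suc i < length cs"
      thus "adj E (cs ! i) (cs ! Suc i)" using lcs axs[of i] j by (simp add: cs_def)
    next
      have "cs \<noteq> []" using lcs by auto
      hence "last cs = cs ! j" using lcs by (simp add: last_conv_nth)
      hence "last cs = y" using xj by (simp add: cs_def)
      moreover have "hd cs = x" using xne by (simp add: cs_def x_def hd_conv_nth)
      ultimately show "adj E (last cs) (hd cs)" using ayx by simp
    qed
    thus ?thesis by blast
  qed
qed

lemma exists_good:
  assumes t: "tree V E" and c3: "card V \<ge> 3"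
  shows "\<exists>w\<in>V. \<exists>c1 c2. adj E w c1 \<and> adj E w c2 \<and> c1 \<noteq> c2 \<and>
     card {u. adj E c1 u} \<le> 2 \<and> card {u. adj E c2 u} \<le> 2"
proof (rule ccontr)
  assume H: "\<not> ?thesis"
  have sg: "simple_graph V E" and Vne: "V \<noteq> {}" and conn: "connected_graph V E"
    and acyc: "acyclic_graph E" using t by (auto simp: tree_def)
  have finV: "finite V" using sg by (simp add: simple_graph_def)
  have H': "\<And>w c1 c2. w \<in> V \<Longrightarrow> adj E w c1 \<Longrightarrow> adj E w c2 \<Longrightarrow> card {u. adj E c1 u} \<le> 2
     \<Longrightarrow> card {u. adj E c2 u} \<le> 2 \<Longrightarrow> c1 = c2" using H by blast
  show False
  proof (cases "\<exists>b\<in>V. 3 \<le> card {u. adj E b u}")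
    case True
    then obtain b0 where b0: "b0 \<in> V" "3 \<le> card {u. adj E b0 u}" by blast
    define B where "B = {v\<in>V. 3 \<le> card {u. adj E v u}}"
    have finB: "finite B" using finV by (simp add: B_def)
    have b0B: "b0 \<in> B" using b0 by (simp add: B_def)
    have "\<And>b. b \<in> B \<Longrightarrow> 2 \<le> card ({u. adj E b u} \<inter> B)"
    proof -
      fix b assume b: "b \<in> B"
      have bV: "b \<in> V" using b by (simp add: B_def)
      have finN: "finite {u. adj E b u}" using finite_N[OF sg] .
      have "\<forall>x\<in>{u. adj E b u} - B. \<forall>y\<in>{u. adj E b u} - B. x = y"
      proof (intro ballI)
        fix x y assume x: "x \<in> {u. adj E b u} - B" and y: "y \<in> {u. adj E b u} - B"
        have "x \<in> V" "y \<in> V" using x y adj_in_V[OF sg] by auto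
        hence "card {u. adj E x u} \<le> 2" "card {u. adj E y u} \<le> 2" using x y by (auto simp: B_def)
        thus "x = y" using H'[OF bV] x y by auto
      qed
      hence c1: "card ({u. adj E b u} - B) \<le> 1" using finN
        by (metis One_nat_def card_le_Suc0_iff_eq finite_Diff)
      have "{u. adj E b u} = ({u. adj E b u} \<inter> B) \<union> ({u. adj E b u} - B)" by blast
      hence "card {u. adj E b u} \<le> card ({u. adj E b u} \<inter> B) + card ({u. adj E b u} - B)"
        by (metis card_Un_le)
      moreover have "3 \<le> card {u. adj E b u}" using b by (simp add: B_def)
      ultimately show "2 \<le> card ({u. adj E b u} \<inter> B)" using c1 by linarith
    qed
    from cycle_lemma[OF sg finB b0B this] acyc show False by (simp add: acyclic_graph_def)
  next
    case False
    hence all2: "\<And>v. v \<in> V \<Longrightarrow> card {u. adj E v u} \<le> 2" by force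
    have all1: "\<And>v x y. v \<in> V \<Longrightarrow> adj E v x \<Longrightarrow> adj E v y \<Longrightarrow> x = y"
    proof -
      fix v x y assume "v \<in> V" "adj E v x" "adj E v y"
      moreover hence "x \<in> V" "y \<in> V" using adj_in_V[OF sg] by auto
      ultimately show "x = y" using H' all2 by blast
    qed
    obtain u where uV: "u \<in> V" using Vne by blast
    have reach: "\<And>z. (adj E)\<^sup>*\<^sup>* u z \<Longrightarrow> z \<in> insert u {v. adj E u v}"
    proof -
      fix z assume "(adj E)\<^sup>*\<^sup>* u z"
      thus "z \<in> insert u {v. adj E u v}"
      proof (induction rule: rtranclp_induct)
        case base thus ?case by simp
      next
        case (step z z')
        show ?case
        proof (cases "z = u")
          case True thus ?thesis using step by simp
        next
          case False
          hence auz: "adj E u z" using step by simp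
          hence "adj E z u" by (simp add: adj_sym)
          moreover have "z \<in> V" using auz adj_in_V[OF sg] by blast
          ultimately have "z' = u" using all1 step(2) by blast
          thus ?thesis by simp
        qed
      qed
    qed
    have "V \<subseteq> insert u {v. adj E u v}" using reach conn uV by (auto simp: connected_graph_def)
    hence "card V \<le> card (insert u {v. adj E u v})" using finite_N[OF sg] by (intro card_mono) auto
    also have "\<dots> \<le> Suc (card {v. adj E u v})" by (simp add: card_insert_le_m1 card_insert_if finite_N[OF sg])
    also have "card {v. adj E u v} \<le> 1"
      using all1[OF uV] finite_N[OF sg] by (metis One_nat_def card_le_Suc0_iff_eq mem_Collect_eq)
    finally show False using c3 by simp
  qed
qed

theorem corollary2p7:
  fixes V :: "'a set" and E :: "'a set set"
  assumes "tree V E" and "card V \<ge> 3"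
  shows "\<exists>w\<in>V. saturated V E w"
proof -
  have sg: "simple_graph V E" using assms(1) by (simp add: tree_def)
  from exists_good[OF assms] obtain w c1 c2 where "w \<in> V" "adj E w c1" "adj E w c2" "c1 \<noteq> c2"
    "card {u. adj E c1 u} \<le> 2" "card {u. adj E c2 u} \<le> 2" by blast
  thus ?thesis using sat_lemma[OF sg] by blast
qed

end
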